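(* Let $r\ge1$, let $H$ be a multi-hypergraph in which every hyperedge has size at most $r$, let $\mathcal{M}$ be a matroid and $\gamma\colon E(H)\to E(\mathcal{M})$. If $(H,\gamma)$ contains a maximal independent matching of size $\ell\ge 0$, then there exist an integer $a$ with $0\le a\le \ell$ and a set $U\subseteq V(H)$ with $|U|\le (2r-1)a$ such that $H-U$ contains an independent matching of size $\ell-a$ whose labels form a basis of $\mathrm{span}(\gamma(E(H-U)))$.
   Context: A multi-hypergraph $H=(V,E)$ consists of a finite set $V$ and a multiset $E$ of non-empty subsets of $V$; distinct copies of the same subset are distinct hyperedges and may receive different labels. For $U\subseteq V(H)$, $H-U$ has vertex set $V(H)\setminus U$ and all hyperedges disjoint from $U$. $\mathrm{span}$ denotes the closure operator of $\mathcal{M}$; a basis of a flat $S$ is a maximal independent subset of $S$. An independent matching in $(H,\gamma)$ is a collection $M$ of pairwise vertex-disjoint hyperedges with pairwise distinct labels such that $\gamma(M)$ is independent in $\mathcal{M}$ (the empty collection qualifies). It is inclusion-wise maximal if no independent matching strictly contains it, and maximal if there is no independent matching $M'$ with $\mathrm{span}(\gamma(M'))=\mathrm{span}(\gamma(M))$ that is not inclusion-wise maximal. *)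

theory Defs
  imports Main
begin

definition matroid :: "'m set \<Rightarrow> ('m set \<Rightarrow> bool) \<Rightarrow> bool" where
  "matroid Gr indep \<longleftrightarrow> finite Gr \<and> indep {} \<and>
     (\<forall>X. indep X \<longrightarrow> X \<subseteq> Gr) \<and>
     (\<forall>X Y. indep Y \<and> X \<subseteq> Y \<longrightarrow> indep X) \<and>
     (\<forall>X Y. indep X \<and> indep Y \<and> card X < card Y \<longrightarrow> (\<exists>y\<in>Y - X. indep (insert y X)))"

definition mspan :: "'m set \<Rightarrow> ('m set \<Rightarrow> bool) \<Rightarrow> 'm set \<Rightarrow> 'm set" where
  "mspan Gr indep X = {x \<in> Gr. x \<in> X \<or> (\<exists>I\<subseteq>X. indep I \<and> \<not> indep (insert x I))}"

definition basis_of :: "('m set \<Rightarrow> bool) \<Rightarrow> 'm set \<Rightarrow> 'm set \<Rightarrow> bool" where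
  "basis_of indep S B \<longleftrightarrow> B \<subseteq> S \<and> indep B \<and> (\<forall>x\<in>S - B. \<not> indep (insert x B))"

text \<open>Multi-hypergraph: vertex set V, hyperedge index set E, incidence inc e \<subseteq> V.\<close>
definition multi_hypergraph :: "'v set \<Rightarrow> 'e set \<Rightarrow> ('e \<Rightarrow> 'v set) \<Rightarrow> bool" where
  "multi_hypergraph V E inc \<longleftrightarrow> finite V \<and> finite E \<and>
     (\<forall>e\<in>E. inc e \<noteq> {} \<and> inc e \<subseteq> V)"

definition edges_minus :: "'e set \<Rightarrow> ('e \<Rightarrow> 'v set) \<Rightarrow> 'v set \<Rightarrow> 'e set" where
  "edges_minus E inc U = {e \<in> E. inc e \<inter> U = {}}"

definition indep_matching ::
  "('m set \<Rightarrow> bool) \<Rightarrow> 'e set \<Rightarrow> ('e \<Rightarrow> 'v set) \<Rightarrow> ('e \<Rightarrow> 'm) \<Rightarrow> 'e set \<Rightarrow> bool" where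
  "indep_matching indep E inc \<gamma> M \<longleftrightarrow> M \<subseteq> E \<and>
     (\<forall>e\<in>M. \<forall>f\<in>M. e \<noteq> f \<longrightarrow> inc e \<inter> inc f = {}) \<and>
     inj_on \<gamma> M \<and> indep (\<gamma> ` M)"

definition incl_max_indep_matching ::
  "('m set \<Rightarrow> bool) \<Rightarrow> 'e set \<Rightarrow> ('e \<Rightarrow> 'v set) \<Rightarrow> ('e \<Rightarrow> 'm) \<Rightarrow> 'e set \<Rightarrow> bool" where
  "incl_max_indep_matching indep E inc \<gamma> M \<longleftrightarrow> indep_matching indep E inc \<gamma> M \<and>
     (\<forall>M'. indep_matching indep E inc \<gamma> M' \<and> M \<subseteq> M' \<longrightarrow> M' = M)"

definition max_indep_matching ::
  "'m set \<Rightarrow> ('m set \<Rightarrow> bool) \<Rightarrow> 'e set \<Rightarrow> ('e \<Rightarrow> 'v set) \<Rightarrow> ('e \<Rightarrow> 'm) \<Rightarrow> 'e set \<Rightarrow> bool" where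
  "max_indep_matching Gr indep E inc \<gamma> M \<longleftrightarrow> indep_matching indep E inc \<gamma> M \<and>
     (\<forall>M'. indep_matching indep E inc \<gamma> M' \<and>
           mspan Gr indep (\<gamma> ` M') = mspan Gr indep (\<gamma> ` M) \<longrightarrow>
           incl_max_indep_matching indep E inc \<gamma> M')"

end

theory Submission imports Defs begin

context
  fixes Gr :: "'m set" and indep :: "'m set \<Rightarrow> bool"
  assumes M: "matroid Gr indep"
begin

lemma Mc: "finite Gr" "indep {}" "\<forall>X. indep X \<longrightarrow> X \<subseteq> Gr"
  "\<forall>X Y. indep Y \<and> X \<subseteq> Y \<longrightarrow> indep X"
  "\<forall>X Y. indep X \<and> indep Y \<and> card X < card Y \<longrightarrow> (\<exists>y\<in>Y - X. indep (insert y X))"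
  using M unfolding matroid_def by simp_all

lemma m_sub: "indep X \<Longrightarrow> X \<subseteq> Gr" using Mc(3) by blast
lemma GrF: "finite Gr" by (rule Mc(1))
lemma m_fin: "indep X \<Longrightarrow> finite X" using m_sub GrF finite_subset by blast
lemma m_her: "indep Y \<Longrightarrow> X \<subseteq> Y \<Longrightarrow> indep X" using Mc(4) by blast
lemma m_aug: "indep X \<Longrightarrow> indep Y \<Longrightarrow> card X < card Y \<Longrightarrow> \<exists>y\<in>Y - X. indep (insert y X)"
  using Mc(5) by blast
lemma m_empty: "indep {}" by (rule Mc(2))

lemma span_indep_iff:
  assumes I: "indep I" and xG: "x \<in> Gr" and xI: "x \<notin> I"
  shows "x \<in> mspan Gr indep I \<longleftrightarrow> \<not> indep (insert x I)"
proof
  assume "x \<in> mspan Gr indep I"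
  then obtain J where J: "J \<subseteq> I" "indep J" "\<not> indep (insert x J)" using xI unfolding mspan_def by auto
  show "\<not> indep (insert x I)"
  proof
    assume "indep (insert x I)"
    moreover have "insert x J \<subseteq> insert x I" using J by blast
    ultimately show False using m_her J by blast
  qed
next
  assume "\<not> indep (insert x I)"
  thus "x \<in> mspan Gr indep I" unfolding mspan_def using xG I by blast
qed

lemma span_mono: "X \<subseteq> Y \<Longrightarrow> mspan Gr indep X \<subseteq> mspan Gr indep Y"
  unfolding mspan_def by auto

lemma span_Gr: "mspan Gr indep X \<subseteq> Gr" unfolding mspan_def by auto
lemma span_inc: "X \<subseteq> Gr \<Longrightarrow> X \<subseteq> mspan Gr indep X" unfolding mspan_def by auto

lemma max_ext:
  assumes "A \<subseteq> X" "X \<subseteq> Gr" "indep A"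
  shows "\<exists>K. A \<subseteq> K \<and> K \<subseteq> X \<and> indep K \<and> (\<forall>y\<in>X - K. \<not> indep (insert y K))"
proof -
  define C where "C = {K. A \<subseteq> K \<and> K \<subseteq> X \<and> indep K}"
  have fX: "finite X" using assms GrF finite_subset by blast
  have fC: "finite C" unfolding C_def using fX by (rule rev_finite_subset[OF finite_Pow_iff[THEN iffD2]]) auto
  have "A \<in> C" using assms unfolding C_def by auto
  have "Max (card ` C) \<in> card ` C" using fC \<open>A \<in> C\<close> by (intro Max_in) auto
  then obtain K where K: "K \<in> C" "card K = Max (card ` C)" by auto
  have "\<forall>y\<in>X - K. \<not> indep (insert y K)"
  proof (intro ballI notI)
    fix y assume y: "y \<in> X - K" and i: "indep (insert y K)"
    hence "insert y K \<in> C" using K(1) unfolding C_def by auto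
    hence "card (insert y K) \<le> Max (card ` C)" using fC by simp
    moreover have "finite K" using K(1) fX unfolding C_def using finite_subset by blast
    ultimately show False using K(2) y by simp
  qed
  thus ?thesis using K(1) unfolding C_def by blast
qed

lemma maxind_card:
  assumes "K \<subseteq> X" "indep K" "\<forall>y\<in>X - K. \<not> indep (insert y K)" "L \<subseteq> X" "indep L"
  shows "card L \<le> card K"
proof (rule ccontr)
  assume "\<not> card L \<le> card K"
  then obtain y where "y \<in> L - K" "indep (insert y K)" using m_aug assms by (meson not_le)
  thus False using assms by blast
qed

lemma maxind_span:
  assumes "K \<subseteq> X" "indep K" "\<forall>y\<in>X - K. \<not> indep (insert y K)" "X \<subseteq> Gr"
  shows "X \<subseteq> mspan Gr indep K"
  using assms unfolding mspan_def by blast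

lemma span_of_max:
  assumes K: "K \<subseteq> X" "indep K" "\<forall>y\<in>X - K. \<not> indep (insert y K)" and X: "X \<subseteq> Gr"
  shows "mspan Gr indep X \<subseteq> mspan Gr indep K"
proof
  fix y assume y: "y \<in> mspan Gr indep X"
  hence yG: "y \<in> Gr" unfolding mspan_def by blast
  show "y \<in> mspan Gr indep K"
  proof (cases "y \<in> X")
    case True thus ?thesis using maxind_span[OF K X] by blast
  next
    case False
    then obtain J where J: "J \<subseteq> X" "indep J" "\<not> indep (insert y J)" using y unfolding mspan_def by blast
    show ?thesis
    proof (rule ccontr)
      assume ny: "y \<notin> mspan Gr indep K"
      have yK: "y \<notin> K" using False K by blast
      have iyK: "indep (insert y K)" using ny span_indep_iff[OF K(2) yG yK] by blast
      obtain K' where K': "J \<subseteq> K'" "K' \<subseteq> X" "indep K'" "\<forall>z\<in>X - K'. \<not> indep (insert z K')"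
        using max_ext[OF J(1) X J(2)] by blast
      have "card K' \<le> card K" using maxind_card[OF K K'(2,3)] .
      moreover have "card (insert y K) = card K + 1" using yK m_fin[OF K(2)] by simp
      ultimately obtain z where z: "z \<in> insert y K - K'" "indep (insert z K')"
        using m_aug[OF K'(3) iyK] by force
      show False
      proof (cases "z = y")
        case True thus False using z J K' m_her[of "insert y K'" "insert y J"] by blast
      next
        case False thus False using z K K' by blast
      qed
    qed
  qed
qed

lemma span_trans:
  assumes Y: "Y \<subseteq> Gr" and XY: "X \<subseteq> mspan Gr indep Y"
  shows "mspan Gr indep X \<subseteq> mspan Gr indep Y"
proof
  obtain K where K: "K \<subseteq> Y" "indep K" "\<forall>z\<in>Y - K. \<not> indep (insert z K)"
    using max_ext[of "{}" Y] Y m_empty by blast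
  have eq: "mspan Gr indep Y = mspan Gr indep K"
    using span_of_max[OF K Y] span_mono[OF K(1)] by blast
  fix x assume x: "x \<in> mspan Gr indep X"
  hence xG: "x \<in> Gr" unfolding mspan_def by blast
  show "x \<in> mspan Gr indep Y"
  proof (cases "x \<in> X")
    case True thus ?thesis using XY by blast
  next
    case False
    then obtain J where J: "J \<subseteq> X" "indep J" "\<not> indep (insert x J)" using x unfolding mspan_def by blast
    have JK: "J \<subseteq> mspan Gr indep K" using J XY eq by blast
    show ?thesis
    proof (rule ccontr)
      assume "x \<notin> mspan Gr indep Y"
      hence nx: "x \<notin> mspan Gr indep K" using eq by simp
      have xK: "x \<notin> K" using nx span_inc[OF m_sub[OF K(2)]] by blast
      have ixK: "indep (insert x K)" using nx span_indep_iff[OF K(2) xG xK] by blast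
      have JKG: "J \<union> K \<subseteq> Gr" using m_sub J(2) K(2) by blast
      obtain K2 where K2: "J \<subseteq> K2" "K2 \<subseteq> J \<union> K" "indep K2" "\<forall>z\<in>(J \<union> K) - K2. \<not> indep (insert z K2)"
        using max_ext[of J "J \<union> K"] JKG J(2) by blast
      have c: "card K2 \<le> card K"
      proof (rule ccontr)
        assume "\<not> card K2 \<le> card K"
        then obtain z where z: "z \<in> K2 - K" "indep (insert z K)" using m_aug[OF K(2) K2(3)] by force
        hence "z \<in> J" using K2 by blast
        hence "z \<in> mspan Gr indep K" using JK by blast
        moreover have "z \<in> Gr" using z m_sub by blast
        ultimately show False using z span_indep_iff[OF K(2)] by blast
      qed
      have "card (insert x K) = card K + 1" using xK m_fin[OF K(2)] by simp
      then obtain z where z: "z \<in> insert x K - K2" "indep (insert z K2)"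
        using m_aug[OF K2(3) ixK] c by force
      show False
      proof (cases "z = x")
        case True thus False using z J K2 m_her[of "insert x K2" "insert x J"] by blast
      next
        case False thus False using z K2 by blast
      qed
    qed
  qed
qed

lemma span_eq_card:
  assumes "indep A" "indep B" "mspan Gr indep A = mspan Gr indep B"
  shows "card A = card B"
proof -
  have *: "card A \<le> card B" if t1: "indep A" and t2: "indep B" and t3: "mspan Gr indep A = mspan Gr indep B" for A B
  proof (rule ccontr)
    assume "\<not> card A \<le> card B"
    then obtain y where y: "y \<in> A - B" "indep (insert y B)" using m_aug[OF t2 t1] by force
    have "y \<in> mspan Gr indep B" using y t3 span_inc[OF m_sub[OF t1]] by blast
    thus False using y span_indep_iff[OF t2] m_sub[OF t1] by blast
  qed
  show ?thesis using *[OF assms] *[OF assms(2,1) assms(3)[symmetric]] by simp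
qed

lemma exch_indep:
  assumes A: "indep A" and B: "indep B" and eq: "mspan Gr indep A = mspan Gr indep B"
    and AC: "indep (A \<union> C)" and d: "A \<inter> C = {}"
  shows "indep (B \<union> C) \<and> B \<inter> C = {}"
proof -
  have BA: "B \<subseteq> mspan Gr indep A" using eq span_inc[OF m_sub[OF B]] by blast
  have AB: "A \<subseteq> mspan Gr indep B" using eq span_inc[OF m_sub[OF A]] by blast
  have CG: "C \<subseteq> Gr" using m_sub[OF AC] by blast
  have dBC: "B \<inter> C = {}"
  proof (rule ccontr)
    assume "B \<inter> C \<noteq> {}"
    then obtain c where c: "c \<in> B" "c \<in> C" by blast
    have "c \<notin> A" using c d by blast
    moreover have "c \<in> mspan Gr indep A" using c BA by blast
    ultimately have "\<not> indep (insert c A)" using span_indep_iff[OF A] CG c by blast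
    moreover have "insert c A \<subseteq> A \<union> C" using c by blast
    ultimately show False using m_her[OF AC] by blast
  qed
  have BCG: "B \<union> C \<subseteq> Gr" using CG m_sub[OF B] by blast
  obtain K where K: "B \<subseteq> K" "K \<subseteq> B \<union> C" "indep K" "\<forall>z\<in>(B \<union> C) - K. \<not> indep (insert z K)"
    using max_ext[of B "B \<union> C"] BCG B by blast
  have "K = B \<union> C"
  proof (rule ccontr)
    assume "K \<noteq> B \<union> C"
    hence "K \<subset> B \<union> C" using K by blast
    moreover have fBC: "finite (B \<union> C)" using BCG GrF finite_subset by blast
    ultimately have "card K < card (B \<union> C)" by (simp add: psubset_card_mono)
    also have "card (B \<union> C) = card B + card C" using dBC fBC by (simp add: card_Un_disjoint)
    also have "card B = card A" using span_eq_card[OF A B eq] by simp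
    also have "card A + card C = card (A \<union> C)" using d m_fin[OF AC] by (simp add: card_Un_disjoint)
    finally obtain z where z: "z \<in> (A \<union> C) - K" "indep (insert z K)" using m_aug[OF K(3) AC] by blast
    show False
    proof (cases "z \<in> C")
      case True thus False using z K by blast
    next
      case False
      hence "z \<in> A" "z \<notin> B" using z K by blast+
      hence "\<not> indep (insert z B)" using AB span_indep_iff[OF B] m_sub[OF A] by blast
      moreover have "insert z B \<subseteq> insert z K" using K by blast
      ultimately show False using z m_her by blast
    qed
  qed
  thus ?thesis using K dBC by simp
qed

lemma span_union_eq:
  assumes "A \<subseteq> Gr" "B \<subseteq> Gr" "C \<subseteq> Gr" "mspan Gr indep A = mspan Gr indep B"
  shows "mspan Gr indep (A \<union> C) = mspan Gr indep (B \<union> C)"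
proof -
  have *: "mspan Gr indep (A \<union> C) \<subseteq> mspan Gr indep (B \<union> C)"
    if "A \<subseteq> Gr" "B \<subseteq> Gr" "C \<subseteq> Gr" "mspan Gr indep A = mspan Gr indep B" for A B
  proof (rule span_trans)
    show "B \<union> C \<subseteq> Gr" using that by blast
    have "A \<subseteq> mspan Gr indep B" using that span_inc by blast
    also have "\<dots> \<subseteq> mspan Gr indep (B \<union> C)" by (rule span_mono) blast
    finally show "A \<union> C \<subseteq> mspan Gr indep (B \<union> C)"
      using span_inc[of "B \<union> C"] that by blast
  qed
  show ?thesis using *[OF assms] *[OF assms(2,1,3) assms(4)[symmetric]] by blast
qed

lemma base_basis:
  assumes "indep I" "I \<subseteq> S" "S \<subseteq> Gr" "S \<subseteq> mspan Gr indep I"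
  shows "basis_of indep (mspan Gr indep S) I"
  unfolding basis_of_def
proof (intro conjI ballI)
  show "I \<subseteq> mspan Gr indep S" using assms span_inc by blast
  show "indep I" by fact
  fix x assume x: "x \<in> mspan Gr indep S - I"
  have "x \<in> mspan Gr indep I" using x span_trans[OF m_sub[OF assms(1)] assms(4)] by blast
  thus "\<not> indep (insert x I)" using x span_indep_iff[OF assms(1)] span_Gr by blast
qed

end

definition pdisj :: "('e \<Rightarrow> 'v set) \<Rightarrow> 'e set \<Rightarrow> bool" where
  "pdisj inc A \<longleftrightarrow> (\<forall>x\<in>A. \<forall>y\<in>A. x \<noteq> y \<longrightarrow> inc x \<inter> inc y = {})"

lemma pdisj_Un:
  assumes "pdisj inc A" "pdisj inc B" "\<And>x y. x \<in> A \<Longrightarrow> y \<in> B \<Longrightarrow> inc x \<inter> inc y = {}"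
  shows "pdisj inc (A \<union> B)"
  unfolding pdisj_def
proof (intro ballI impI)
  fix x y assume x: "x \<in> A \<union> B" and y: "y \<in> A \<union> B" and xy: "x \<noteq> y"
  show "inc x \<inter> inc y = {}"
  proof (cases "x \<in> A")
    case True
    show ?thesis
    proof (cases "y \<in> A")
      case True thus ?thesis using \<open>x \<in> A\<close> xy assms(1) unfolding pdisj_def by blast
    next
      case False thus ?thesis using \<open>x \<in> A\<close> y assms(3) by blast
    qed
  next
    case False
    hence xB: "x \<in> B" using x by blast
    show ?thesis
    proof (cases "y \<in> A")
      case True thus ?thesis using xB assms(3)[of y x] by blast
    next
      case False thus ?thesis using xB y xy assms(2) unfolding pdisj_def by blast
    qed
  qed
qed

lemma pdisj_sub: "pdisj inc A \<Longrightarrow> B \<subseteq> A \<Longrightarrow> pdisj inc B"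
  unfolding pdisj_def by blast

lemma pdisj_single: "pdisj inc {a}" unfolding pdisj_def by blast

lemma main_ind:
  fixes V :: "'v set" and E :: "'e set" and inc :: "'e \<Rightarrow> 'v set"
    and Gr :: "'m set" and indep :: "'m set \<Rightarrow> bool" and \<gamma> :: "'e \<Rightarrow> 'm"
    and r l :: nat and M :: "'e set"
  assumes Mat: "matroid Gr indep" and r1: "r \<ge> 1"
  shows "multi_hypergraph V E inc \<Longrightarrow> \<forall>e\<in>E. card (inc e) \<le> r \<Longrightarrow> \<gamma> ` E \<subseteq> Gr
    \<Longrightarrow> max_indep_matching Gr indep E inc \<gamma> M \<Longrightarrow> card M = l \<Longrightarrow>
    \<exists>a::nat. a \<le> l \<and> (\<exists>U. U \<subseteq> V \<and> card U \<le> (2 * r - 1) * a \<and>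
           (\<exists>M'. indep_matching indep (edges_minus E inc U) inc \<gamma> M' \<and> card M' = l - a \<and>
              basis_of indep (mspan Gr indep (\<gamma> ` edges_minus E inc U)) (\<gamma> ` M')))"
proof (induction l arbitrary: V E M rule: less_induct)
  case (less l V E M)
  let ?sp = "mspan Gr indep"
  have fV: "finite V" and fE: "finite E" and incE: "\<forall>e\<in>E. inc e \<noteq> {} \<and> inc e \<subseteq> V"
    using less.prems(1) unfolding multi_hypergraph_def by auto
  have cr: "\<forall>e\<in>E. card (inc e) \<le> r" and gE: "\<gamma> ` E \<subseteq> Gr" and cM: "card M = l"
    using less.prems by auto
  have imM: "indep_matching indep E inc \<gamma> M"
    and maxS: "\<And>S. indep_matching indep E inc \<gamma> S \<Longrightarrow> ?sp (\<gamma> ` S) = ?sp (\<gamma> ` M)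
                  \<Longrightarrow> incl_max_indep_matching indep E inc \<gamma> S"
    using less.prems(4) unfolding max_indep_matching_def by auto
  have ME: "M \<subseteq> E" and injM: "inj_on \<gamma> M" and indM: "indep (\<gamma> ` M)"
    using imM unfolding indep_matching_def by auto
  show ?case
  proof (cases "\<gamma> ` E \<subseteq> ?sp (\<gamma> ` M)")
    case True
    have eq: "edges_minus E inc {} = E" unfolding edges_minus_def by blast
    have b: "basis_of indep (?sp (\<gamma> ` E)) (\<gamma> ` M)"
      using base_basis[OF Mat indM _ gE True] ME by blast
    have "0 \<le> l \<and> ({}::'v set) \<subseteq> V \<and> card ({}::'v set) \<le> (2 * r - 1) * 0 \<and>
           (\<exists>M'. indep_matching indep (edges_minus E inc {}) inc \<gamma> M' \<and> card M' = l - 0 \<and>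
              basis_of indep (mspan Gr indep (\<gamma> ` edges_minus E inc {})) (\<gamma> ` M'))"
      using b imM cM eq by auto
    then show ?thesis by blast
  next
    case False
    then obtain e0 where e0: "e0 \<in> E" "\<gamma> e0 \<notin> ?sp (\<gamma> ` M)" by blast
    define P where "P = (\<lambda>(N, e). indep_matching indep E inc \<gamma> N \<and> ?sp (\<gamma> ` N) = ?sp (\<gamma> ` M)
                         \<and> e \<in> E \<and> \<gamma> e \<notin> ?sp (\<gamma> ` M))"
    define cnt where "cnt = (\<lambda>(N::'e set, e). card {f\<in>N. inc f \<inter> inc e \<noteq> {}})"
    have "P (M, e0)" using imM e0 unfolding P_def by simp
    then obtain p where p: "P p" "\<forall>q. P q \<longrightarrow> cnt p \<le> cnt q"
      using ex_has_least_nat[of P "(M,e0)" cnt] by blast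
    obtain N e where pNe: "p = (N, e)" by (cases p)
    have imN: "indep_matching indep E inc \<gamma> N" and spN: "?sp (\<gamma> ` N) = ?sp (\<gamma> ` M)"
      and eE: "e \<in> E" and ge: "\<gamma> e \<notin> ?sp (\<gamma> ` M)"
      using p(1) unfolding P_def pNe by auto
    have minN: "card {f\<in>N. inc f \<inter> inc e \<noteq> {}} \<le> card {f\<in>N'. inc f \<inter> inc e' \<noteq> {}}"
      if "indep_matching indep E inc \<gamma> N'" "?sp (\<gamma> ` N') = ?sp (\<gamma> ` M)" "e' \<in> E"
         "\<gamma> e' \<notin> ?sp (\<gamma> ` M)" for N' e'
    proof -
      have "P (N', e')" using that unfolding P_def by simp
      hence "cnt p \<le> cnt (N', e')" using p(2) by blast
      thus ?thesis unfolding cnt_def pNe by simp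
    qed
    have NE: "N \<subseteq> E" and Ndisj: "\<forall>x\<in>N. \<forall>y\<in>N. x \<noteq> y \<longrightarrow> inc x \<inter> inc y = {}"
      and injN: "inj_on \<gamma> N" and indN: "indep (\<gamma> ` N)"
      using imN unfolding indep_matching_def by auto
    have fN: "finite N" using finite_subset[OF NE fE] .
    have cN: "card N = l"
    proof -
      have "card (\<gamma> ` N) = card (\<gamma> ` M)" using span_eq_card[OF Mat indN indM spN] .
      thus ?thesis using card_image[OF injN] card_image[OF injM] cM by simp
    qed
    have inclN: "incl_max_indep_matching indep E inc \<gamma> N" using maxS[OF imN spN] .
    have geG: "\<gamma> e \<in> Gr" using eE gE by blast
    have gNG: "\<gamma> ` N \<subseteq> Gr" using NE gE by blast
    define F where "F = {f\<in>N. inc f \<inter> inc e \<noteq> {}}"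
    have FN: "F \<subseteq> N" unfolding F_def by blast
    have fF: "finite F" using finite_subset[OF FN fN] .
    have Fne: "F \<noteq> {}"
    proof
      assume F0: "F = {}"
      have eN: "\<gamma> e \<notin> \<gamma> ` N" using ge spN span_inc[OF Mat gNG] by blast
      hence eN': "e \<notin> N" by blast
      have "indep_matching indep E inc \<gamma> (insert e N)"
        unfolding indep_matching_def
      proof (intro conjI)
        show "insert e N \<subseteq> E" using NE eE by blast
        have "pdisj inc (N \<union> {e})"
        proof (rule pdisj_Un)
          show "pdisj inc N" using Ndisj unfolding pdisj_def .
          show "pdisj inc {e}" by (rule pdisj_single)
          fix x y assume "x \<in> N" "y \<in> {e}"
          thus "inc x \<inter> inc y = {}" using F0 unfolding F_def by blast
        qed
        thus "\<forall>x\<in>insert e N. \<forall>y\<in>insert e N. x \<noteq> y \<longrightarrow> inc x \<inter> inc y = {}"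
          unfolding pdisj_def by simp
        show "inj_on \<gamma> (insert e N)" using injN eN eN' by simp
        have "\<not> (\<gamma> e \<in> ?sp (\<gamma> ` N))" using ge spN by simp
        hence "indep (insert (\<gamma> e) (\<gamma> ` N))" using span_indep_iff[OF Mat indN geG eN] by blast
        thus "indep (\<gamma> ` insert e N)" by simp
      qed
      hence "insert e N = N" using inclN unfolding incl_max_indep_matching_def by blast
      thus False using eN' by blast
    qed
    define k where "k = card F"
    have k1: "k \<ge> 1" using Fne fF unfolding k_def by (simp add: Suc_le_eq card_gt_0_iff)
    have kl: "k \<le> l" using card_mono[OF fN FN] cN unfolding k_def by simp
    define U1 where "U1 = inc e \<union> \<Union>(inc ` F)"
    have U1V: "U1 \<subseteq> V" using incE eE FN NE unfolding U1_def by blast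
    have finc: "finite (inc x)" if "x \<in> E" for x using incE that fV by (meson finite_subset)
    have cU1: "card U1 \<le> (2 * r - 1) * k"
    proof -
      have U1eq: "U1 = inc e \<union> (\<Union>f\<in>F. inc f - inc e)" unfolding U1_def by blast
      have "card U1 \<le> card (inc e) + card (\<Union>f\<in>F. inc f - inc e)"
        unfolding U1eq by (rule card_Un_le)
      also have "card (\<Union>f\<in>F. inc f - inc e) \<le> (\<Sum>f\<in>F. card (inc f - inc e))"
        by (rule card_UN_le[OF fF])
      also have "(\<Sum>f\<in>F. card (inc f - inc e)) \<le> (\<Sum>f\<in>F. r - 1)"
      proof (rule sum_mono)
        fix f assume f: "f \<in> F"
        hence fE': "f \<in> E" using FN NE by blast
        have ne: "inc f \<inter> inc e \<noteq> {}" using f unfolding F_def by blast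
        have fi: "finite (inc f \<inter> inc e)" using finc[OF fE'] by blast
        have "card (inc f \<inter> inc e) \<ge> 1" using ne fi by (simp add: Suc_le_eq card_gt_0_iff)
        moreover have "card (inc f - inc e) = card (inc f) - card (inc f \<inter> inc e)"
          by (rule card_Diff_subset_Int[OF fi])
        moreover have "card (inc f) \<le> r" using cr fE' by blast
        ultimately show "card (inc f - inc e) \<le> r - 1" by linarith
      qed
      also have "(\<Sum>f\<in>F. r - 1) = k * (r - 1)" unfolding k_def by simp
      finally have a: "card U1 \<le> card (inc e) + k * (r - 1)" by simp
      have "card (inc e) \<le> r" using cr eE by blast
      hence "card U1 \<le> r + k * (r - 1)" using a by linarith
      also have "r + k * (r - 1) \<le> (2 * r - 1) * k"
      proof -
        have "r \<le> r * k" using k1 by simp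
        moreover have "(2 * r - 1) * k = r * k + (r - 1) * k" using r1
          by (metis add_mult_distrib diff_add_assoc mult_2 nat_le_linear le_add_diff_inverse2 one_le_numeral order_trans le_add1)
        ultimately show ?thesis by (simp add: mult.commute)
      qed
      finally show ?thesis .
    qed
    define E' where "E' = edges_minus E inc U1"
    define M1 where "M1 = N - F"
    have E'E: "E' \<subseteq> E" unfolding E'_def edges_minus_def by blast
    have E'av: "\<forall>x\<in>E'. inc x \<inter> U1 = {}" unfolding E'_def edges_minus_def by blast
    have FU1: "\<forall>f\<in>F. inc f \<subseteq> U1" unfolding U1_def by blast
    have eU1: "inc e \<subseteq> U1" unfolding U1_def by blast
    have FE'': "\<forall>f\<in>F. f \<notin> E'" using FU1 E'av incE FN NE by blast
    have M1E': "M1 \<subseteq> E'"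
    proof
      fix x assume x: "x \<in> M1"
      hence xN: "x \<in> N" and xF: "x \<notin> F" unfolding M1_def by auto
      have "inc x \<inter> inc e = {}" using xN xF unfolding F_def by blast
      moreover have "inc x \<inter> inc f = {}" if fF1: "f \<in> F" for f
      proof -
        have "f \<in> N" using FN fF1 by blast
        moreover have "x \<noteq> f" using xF fF1 by blast
        ultimately show ?thesis using Ndisj[rule_format, OF xN] by blast
      qed
      ultimately have "inc x \<inter> U1 = {}" unfolding U1_def by blast
      thus "x \<in> E'" using xN NE unfolding E'_def edges_minus_def by blast
    qed
    have cM1: "card M1 = l - k" unfolding M1_def k_def using card_Diff_subset[OF fF FN] cN by simp
    have maxM1: "max_indep_matching Gr indep E' inc \<gamma> M1"
      unfolding max_indep_matching_def
    proof (intro conjI allI impI)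
      show "indep_matching indep E' inc \<gamma> M1"
        unfolding indep_matching_def
      proof (intro conjI)
        show "M1 \<subseteq> E'" by fact
        have "M1 \<subseteq> N" unfolding M1_def by blast
        moreover have "pdisj inc N" using Ndisj unfolding pdisj_def .
        ultimately have "pdisj inc M1" using pdisj_sub by blast
        thus "\<forall>x\<in>M1. \<forall>y\<in>M1. x \<noteq> y \<longrightarrow> inc x \<inter> inc y = {}" unfolding pdisj_def .
        show "inj_on \<gamma> M1" using injN unfolding M1_def by (rule inj_on_subset) blast
        show "indep (\<gamma> ` M1)" using m_her[OF Mat indN image_mono[OF \<open>M1 \<subseteq> N\<close>]] .
      qed
      fix N2 assume N2: "indep_matching indep E' inc \<gamma> N2 \<and> ?sp (\<gamma> ` N2) = ?sp (\<gamma> ` M1)"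
      hence imN2: "indep_matching indep E' inc \<gamma> N2" and spN2: "?sp (\<gamma> ` N2) = ?sp (\<gamma> ` M1)" by auto
      show "incl_max_indep_matching indep E' inc \<gamma> N2"
        unfolding incl_max_indep_matching_def
      proof (intro conjI allI impI)
        show "indep_matching indep E' inc \<gamma> N2" by fact
        fix N3 assume N3: "indep_matching indep E' inc \<gamma> N3 \<and> N2 \<subseteq> N3"
        show "N3 = N2"
        proof (rule ccontr)
          assume "N3 \<noteq> N2"
          then obtain g where g: "g \<in> N3" "g \<notin> N2" using N3 by blast
          have N2E': "N2 \<subseteq> E'" and injN2: "inj_on \<gamma> N2" and indN2: "indep (\<gamma> ` N2)"
            and N2disj: "\<forall>x\<in>N2. \<forall>y\<in>N2. x \<noteq> y \<longrightarrow> inc x \<inter> inc y = {}"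
            using imN2 unfolding indep_matching_def by auto
          have N3E': "N3 \<subseteq> E'" and injN3: "inj_on \<gamma> N3" and indN3: "indep (\<gamma> ` N3)"
            and N3disj: "\<forall>x\<in>N3. \<forall>y\<in>N3. x \<noteq> y \<longrightarrow> inc x \<inter> inc y = {}" and N23: "N2 \<subseteq> N3"
            using N3 unfolding indep_matching_def by auto
          have gE': "g \<in> E'" using g N3E' by blast
          have gE1: "g \<in> E" using gE' E'E by blast
          have gav: "inc g \<inter> U1 = {}" using gE' E'av by blast
          have N2av: "\<forall>x\<in>N2. inc x \<inter> U1 = {}" using N2E' E'av by blast
          have ggN2: "\<forall>x\<in>N2. inc x \<inter> inc g = {}"
          proof
            fix x assume x: "x \<in> N2"
            hence "x \<in> N3" "x \<noteq> g" using N23 g(2) by blast+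
            thus "inc x \<inter> inc g = {}" using N3disj g(1) by simp
          qed
          have gN2sub: "insert g N2 \<subseteq> N3" using g N23 by blast
          have indgN2: "indep (\<gamma> ` insert g N2)" using m_her[OF Mat indN3 image_mono[OF gN2sub]] .
          have gnot: "\<gamma> g \<notin> \<gamma> ` N2" using inj_on_image_mem_iff[OF injN3 g(1) N23] g(2) by simp
          have fN2: "finite N2" using finite_subset[OF order_trans[OF N2E' E'E] fE] .
          have NMF: "N = M1 \<union> F" using FN unfolding M1_def by blast
          have gN: "\<gamma> ` N = \<gamma> ` M1 \<union> \<gamma> ` F" unfolding NMF by (rule image_Un)
          have M1N: "M1 \<subseteq> N" unfolding M1_def by blast
          have M1F: "M1 \<inter> F = {}" unfolding M1_def by blast
          have dM1F: "\<gamma> ` M1 \<inter> \<gamma> ` F = {}"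
            using inj_on_image_Int[OF injN M1N FN] M1F by simp
          have indM1F: "indep (\<gamma> ` M1 \<union> \<gamma> ` F)" using indN gN by simp
          have indM1: "indep (\<gamma> ` M1)" using m_her[OF Mat indM1F Un_upper1] .
          have ex: "indep (\<gamma> ` N2 \<union> \<gamma> ` F) \<and> \<gamma> ` N2 \<inter> \<gamma> ` F = {}"
            using exch_indep[OF Mat indM1 indN2 spN2[symmetric] indM1F dM1F] .
          hence indS0: "indep (\<gamma> ` N2 \<union> \<gamma> ` F)" and dN2F: "\<gamma> ` N2 \<inter> \<gamma> ` F = {}" by auto
          define S where "S = N2 \<union> F"
          have gS: "\<gamma> ` S = \<gamma> ` N2 \<union> \<gamma> ` F" unfolding S_def by (rule image_Un)
          have indS: "indep (\<gamma> ` S)" using indS0 gS by simp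
          have SG: "\<gamma> ` S \<subseteq> Gr" using m_sub[OF Mat indS] .
          have spS: "?sp (\<gamma> ` S) = ?sp (\<gamma> ` M)"
          proof -
            have "?sp (\<gamma> ` S) = ?sp (\<gamma> ` N2 \<union> \<gamma> ` F)" using gS by simp
            also have "\<dots> = ?sp (\<gamma> ` M1 \<union> \<gamma> ` F)"
            proof (rule span_union_eq[OF Mat _ _ _ spN2])
              show "\<gamma> ` N2 \<subseteq> Gr" using m_sub[OF Mat indN2] .
              show "\<gamma> ` M1 \<subseteq> Gr" using m_sub[OF Mat indM1] .
              show "\<gamma> ` F \<subseteq> Gr" using m_sub[OF Mat indM1F] by (simp add: Un_subset_iff)
            qed
            also have "\<dots> = ?sp (\<gamma> ` N)" using gN by simp
            finally show ?thesis using spN by simp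
          qed
          have injF: "inj_on \<gamma> F" using injN FN by (rule inj_on_subset)
          have injS: "inj_on \<gamma> S" unfolding S_def inj_on_Un
          proof (intro conjI)
            show "inj_on \<gamma> N2" by fact
            show "inj_on \<gamma> F" by fact
            have "\<gamma> ` (N2 - F) \<inter> \<gamma> ` (F - N2) \<subseteq> \<gamma> ` N2 \<inter> \<gamma> ` F" by (intro Int_mono image_mono) auto
            thus "\<gamma> ` (N2 - F) \<inter> \<gamma> ` (F - N2) = {}" using dN2F by simp
          qed
          have SE: "S \<subseteq> E" unfolding S_def using N2E' E'E FN NE by (simp add: Un_subset_iff) (meson order_trans)
          have pN: "pdisj inc N" using Ndisj unfolding pdisj_def .
          have pF: "pdisj inc F" using pdisj_sub[OF pN FN] .
          have pS: "pdisj inc S" unfolding S_def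
          proof (rule pdisj_Un)
            show "pdisj inc N2" using N2disj unfolding pdisj_def .
            show "pdisj inc F" by (rule pF)
            fix x y assume "x \<in> N2" "y \<in> F"
            thus "inc x \<inter> inc y = {}" using N2av FU1 by blast
          qed
          hence Sdisj: "\<forall>x\<in>S. \<forall>y\<in>S. x \<noteq> y \<longrightarrow> inc x \<inter> inc y = {}" unfolding pdisj_def .
          have imS: "indep_matching indep E inc \<gamma> S"
            unfolding indep_matching_def using SE Sdisj injS indS by blast
          have gnF: "g \<notin> F" using FE'' gE' by blast
          have gnS: "g \<notin> S" using g(2) gnF unfolding S_def by blast
          have ggG: "\<gamma> g \<in> Gr" using gE1 gE by blast
          show False
          proof (cases "\<gamma> g \<in> ?sp (\<gamma> ` S)")
            case False
            have gnS': "\<gamma> g \<notin> \<gamma> ` S" using False span_inc[OF Mat SG] by blast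
            have "indep_matching indep E inc \<gamma> (insert g S)"
              unfolding indep_matching_def
            proof (intro conjI)
              show "insert g S \<subseteq> E" using SE gE1 by blast
              have "pdisj inc (S \<union> {g})"
              proof (rule pdisj_Un)
                show "pdisj inc S" by (rule pS)
                show "pdisj inc {g}" by (rule pdisj_single)
                fix x y assume x: "x \<in> S" and y: "y \<in> {g}"
                show "inc x \<inter> inc y = {}"
                proof (cases "x \<in> N2")
                  case True thus ?thesis using ggN2 y by blast
                next
                  case False hence "x \<in> F" using x unfolding S_def by blast
                  hence "inc x \<subseteq> U1" using FU1 by blast
                  thus ?thesis using gav y by blast
                qed
              qed
              thus "\<forall>x\<in>insert g S. \<forall>y\<in>insert g S. x \<noteq> y \<longrightarrow> inc x \<inter> inc y = {}"
                unfolding pdisj_def by simp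
              show "inj_on \<gamma> (insert g S)" using injS gnS' gnS by simp
              have "indep (insert (\<gamma> g) (\<gamma> ` S))" using span_indep_iff[OF Mat indS ggG gnS'] False by blast
              thus "indep (\<gamma> ` insert g S)" by simp
            qed
            hence "insert g S = S" using maxS[OF imS spS] unfolding incl_max_indep_matching_def by blast
            thus False using gnS by blast
          next
            case True
            define X where "X = \<gamma> ` insert g N2 \<union> \<gamma> ` F"
            have XG: "X \<subseteq> Gr" unfolding X_def using ggG SG gS by blast
            obtain K where K: "\<gamma> ` insert g N2 \<subseteq> K" "K \<subseteq> X" "indep K" "\<forall>y\<in>X - K. \<not> indep (insert y K)"
              using max_ext[OF Mat, of "\<gamma> ` insert g N2" X] XG indgN2 unfolding X_def by blast
            define F' where "F' = {f\<in>F. \<gamma> f \<in> K - \<gamma> ` insert g N2}"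
            have F'F: "F' \<subseteq> F" unfolding F'_def by blast
            have KF: "K = \<gamma> ` insert g N2 \<union> \<gamma> ` F'"
            proof
              show "K \<subseteq> \<gamma> ` insert g N2 \<union> \<gamma> ` F'"
              proof
                fix y assume yK: "y \<in> K"
                show "y \<in> \<gamma> ` insert g N2 \<union> \<gamma> ` F'"
                proof (cases "y \<in> \<gamma> ` insert g N2")
                  case True thus ?thesis by blast
                next
                  case False
                  hence "y \<in> \<gamma> ` F" using yK K(2) unfolding X_def by blast
                  then obtain f where f: "f \<in> F" "y = \<gamma> f" by blast
                  hence "f \<in> F'" using yK False unfolding F'_def by blast
                  thus ?thesis using f by blast
                qed
              qed
              show "\<gamma> ` insert g N2 \<union> \<gamma> ` F' \<subseteq> K" using K(1) unfolding F'_def by blast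
            qed
            have dgF0: "\<forall>f\<in>F'. \<gamma> f \<notin> \<gamma> ` insert g N2" unfolding F'_def by blast
            have dgF': "\<gamma> ` insert g N2 \<inter> \<gamma> ` F' = {}"
            proof (rule ccontr)
              assume "\<gamma> ` insert g N2 \<inter> \<gamma> ` F' \<noteq> {}"
              then obtain y where y1: "y \<in> \<gamma> ` insert g N2" and y2: "y \<in> \<gamma> ` F'" by blast
              from y2 obtain f where "f \<in> F'" "y = \<gamma> f" by blast
              thus False using dgF0 y1 by blast
            qed
            have XS: "X \<subseteq> ?sp (\<gamma> ` S)" unfolding X_def using True span_inc[OF Mat SG] gS by blast
            have spK: "?sp K = ?sp (\<gamma> ` S)"
            proof
              show "?sp K \<subseteq> ?sp (\<gamma> ` S)" using span_trans[OF Mat SG] XS K(2) by blast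
              have "\<gamma> ` S \<subseteq> ?sp K" using maxind_span[OF Mat K(2,3,4) XG] gS unfolding X_def by blast
              thus "?sp (\<gamma> ` S) \<subseteq> ?sp K" using span_trans[OF Mat m_sub[OF Mat K(3)]] by blast
            qed
            define S' where "S' = insert g N2 \<union> F'"
            have imS': "indep_matching indep E inc \<gamma> S'"
              unfolding indep_matching_def
            proof (intro conjI)
              show "S' \<subseteq> E" using SE gE1 F'F unfolding S'_def S_def by blast
              have "pdisj inc S'" unfolding S'_def
              proof (rule pdisj_Un)
                have "pdisj inc N3" using N3disj unfolding pdisj_def .
                thus "pdisj inc (insert g N2)" using pdisj_sub gN2sub by blast
                show "pdisj inc F'" using pdisj_sub[OF pF F'F] .
                fix x y assume x: "x \<in> insert g N2" and y: "y \<in> F'"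
                have "inc x \<inter> U1 = {}" using x N2av gav by blast
                moreover have "inc y \<subseteq> U1" using y F'F FU1 by blast
                ultimately show "inc x \<inter> inc y = {}" by blast
              qed
              thus "\<forall>x\<in>S'. \<forall>y\<in>S'. x \<noteq> y \<longrightarrow> inc x \<inter> inc y = {}" unfolding pdisj_def .
              have i1: "inj_on \<gamma> (insert g N2)" using injN3 gN2sub by (rule inj_on_subset)
              have i2: "inj_on \<gamma> F'" using injF F'F by (rule inj_on_subset)
              show "inj_on \<gamma> S'" unfolding S'_def inj_on_Un
              proof (intro conjI i1 i2)
                have "\<gamma> ` (insert g N2 - F') \<inter> \<gamma> ` (F' - insert g N2) \<subseteq> \<gamma> ` insert g N2 \<inter> \<gamma> ` F'" by (intro Int_mono image_mono) auto
                thus "\<gamma> ` (insert g N2 - F') \<inter> \<gamma> ` (F' - insert g N2) = {}" using dgF' by (metis subset_empty)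
              qed
              show "indep (\<gamma> ` S')" using K(3) KF unfolding S'_def by (simp add: image_Un)
            qed
            have gS': "\<gamma> ` S' = K" using KF unfolding S'_def by (simp add: image_Un)
            have spS': "?sp (\<gamma> ` S') = ?sp (\<gamma> ` M)" using gS' spK spS by simp
            have "card F \<le> card {f\<in>S'. inc f \<inter> inc e \<noteq> {}}"
              using minN[OF imS' spS' eE ge] unfolding F_def by simp
            also have "{f\<in>S'. inc f \<inter> inc e \<noteq> {}} = F'"
            proof
              show "{f\<in>S'. inc f \<inter> inc e \<noteq> {}} \<subseteq> F'"
              proof
                fix f assume f: "f \<in> {f\<in>S'. inc f \<inter> inc e \<noteq> {}}"
                show "f \<in> F'"
                proof (rule ccontr)
                  assume "f \<notin> F'"
                  hence "f \<in> insert g N2" using f unfolding S'_def by blast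
                  hence "inc f \<inter> U1 = {}" using N2av gav by blast
                  thus False using f eU1 by blast
                qed
              qed
              show "F' \<subseteq> {f\<in>S'. inc f \<inter> inc e \<noteq> {}}" using F'F unfolding S'_def F_def by blast
            qed
            finally have c1: "card F \<le> card F'" .
            have fF': "finite F'" using finite_subset[OF F'F fF] .
            have "card K = card (\<gamma> ` S)" using span_eq_card[OF Mat K(3) indS spK] .
            moreover have "card K = card (\<gamma> ` insert g N2) + card (\<gamma> ` F')"
              unfolding KF by (rule card_Un_disjoint) (use dgF' fN2 fF' in auto)
            moreover have "card (\<gamma> ` insert g N2) = card (\<gamma> ` N2) + 1" using gnot fN2 by simp
            moreover have "card (\<gamma> ` F') = card F'" using card_image[OF inj_on_subset[OF injF F'F]] .
            moreover have "card (\<gamma> ` S) = card (\<gamma> ` N2) + card (\<gamma> ` F)"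
              unfolding gS using dN2F fN2 fF by (simp add: card_Un_disjoint)
            moreover have "card (\<gamma> ` F) = card F" using card_image[OF injF] .
            ultimately show False using c1 by linarith
          qed
        qed
      qed
    qed
    have mh': "multi_hypergraph (V - U1) E' inc"
      unfolding multi_hypergraph_def using fV fE E'E incE E'av by (auto intro: finite_subset)
    have cr': "\<forall>x\<in>E'. card (inc x) \<le> r" using cr E'E by blast
    have gE': "\<gamma> ` E' \<subseteq> Gr" using gE E'E by blast
    have lt: "l - k < l" using k1 kl by simp
    obtain a' U' M'' where a': "a' \<le> l - k" and U': "U' \<subseteq> V - U1" "card U' \<le> (2 * r - 1) * a'"
      and M'': "indep_matching indep (edges_minus E' inc U') inc \<gamma> M''" "card M'' = l - k - a'"
         "basis_of indep (mspan Gr indep (\<gamma> ` edges_minus E' inc U')) (\<gamma> ` M'')"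
      using less.IH[OF lt mh' cr' gE' maxM1 cM1] by blast
    have eqE: "edges_minus E' inc U' = edges_minus E inc (U1 \<union> U')"
      unfolding E'_def edges_minus_def by blast
    have fU1: "finite U1" using finite_subset[OF U1V fV] .
    have fU': "finite U'" using U'(1) fV by (meson Diff_subset finite_subset order_trans)
    have "card (U1 \<union> U') \<le> card U1 + card U'" by (rule card_Un_le)
    also have "\<dots> \<le> (2 * r - 1) * k + (2 * r - 1) * a'" using cU1 U'(2) by simp
    also have "\<dots> = (2 * r - 1) * (k + a')" by (simp add: add_mult_distrib2)
    finally have cU: "card (U1 \<union> U') \<le> (2 * r - 1) * (k + a')" .
    have "k + a' \<le> l \<and> U1 \<union> U' \<subseteq> V \<and> card (U1 \<union> U') \<le> (2 * r - 1) * (k + a') \<and>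
           (\<exists>M'. indep_matching indep (edges_minus E inc (U1 \<union> U')) inc \<gamma> M' \<and> card M' = l - (k + a') \<and>
              basis_of indep (mspan Gr indep (\<gamma> ` edges_minus E inc (U1 \<union> U'))) (\<gamma> ` M'))"
      using a' kl U1V U' cU M'' eqE by (intro conjI exI[of _ M'']) auto
    thus ?thesis by blast
  qed
qed

theorem mainTheorem6:
  fixes V :: "'v set" and E :: "'e set" and inc :: "'e \<Rightarrow> 'v set"
    and Gr :: "'m set" and indep :: "'m set \<Rightarrow> bool" and \<gamma> :: "'e \<Rightarrow> 'm"
    and r l :: nat and M :: "'e set"
  assumes "r \<ge> 1"
    and "multi_hypergraph V E inc"
    and "\<forall>e\<in>E. card (inc e) \<le> r"
    and "matroid Gr indep"
    and "\<gamma> ` E \<subseteq> Gr"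
    and "max_indep_matching Gr indep E inc \<gamma> M"
    and "card M = l"
  shows "\<exists>a::nat. a \<le> l \<and> (\<exists>U. U \<subseteq> V \<and> card U \<le> (2 * r - 1) * a \<and>
           (\<exists>M'. indep_matching indep (edges_minus E inc U) inc \<gamma> M' \<and> card M' = l - a \<and>
              basis_of indep (mspan Gr indep (\<gamma> ` edges_minus E inc U)) (\<gamma> ` M')))"
  using main_ind[OF assms(4,1) assms(2,3,5,6,7)] .

end
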